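(* Let $m,k,t$ be positive integers with $t<(m-3)/4$, let $C=\{2i+1\mid 1\leq i\leq t\}\cup\{2t+2\}$, and let $c(x)=1+\sum_{j\in C}(x^j+x^{m-j})\in\mathbb{F}_2[x]$. Then $\gcd(c(x^k),x^m-1)=1$ if and only if $\gcd(m,(2t+3)k)=\gcd(m,(2t+1)k)=\gcd(m,3k)=\gcd(m,k)$.
   Context: All polynomials are over $\mathbb{F}_2$. *)

theory Defs
  imports "Berlekamp_Zassenhaus.Finite_Field"
begin

text \<open>The field F_2 is rendered as bool mod_ring (integers modulo CARD(bool) = 2),
  which is an instance of field_gcd, so gcd of polynomials is the usual normalized (monic) gcd.\<close>

type_synonym gf2 = "bool mod_ring"

definition Cset :: "nat \<Rightarrow> nat set" where
  "Cset t = {2*i+1 | i. 1 \<le> i \<and> i \<le> t} \<union> {2*t+2}"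

definition cpoly :: "nat \<Rightarrow> nat \<Rightarrow> gf2 poly" where
  "cpoly m t = 1 + (\<Sum>j\<in>Cset t. monom 1 j + monom 1 (m - j))"

end

theory Submission
  imports Defs
begin

lemma two0: "(2::gf2) = 0"
  using of_nat_card_eq_0[where 'a=bool] by simp
lemma gf2_add_self: "(a::gf2) + a = 0"
  by (metis mult_2 two0 mult_zero_left)
lemma poly_add_self: "(a::gf2 poly) + a = 0"
  by (rule poly_eqI) (simp only: coeff_add gf2_add_self coeff_0)
lemma poly_two: "(2::gf2 poly) = 0"
  using poly_add_self[of 1] by (simp add: one_add_one)
lemma poly_neg: "-(a::gf2 poly) = a"
  by (metis poly_add_self neg_eq_iff_add_eq_0)
lemma poly_diff: "(a::gf2 poly) - b = a + b"
  by (simp add: poly_neg)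

lemma Cset_sum: "(\<Sum>j\<in>Cset t. h j) = (\<Sum>i<t. h (2*i+3)) + h (2*t+2)"
proof -
  have e0: "{2*i+1 | i. 1 \<le> i \<and> i \<le> t} = (\<lambda>i. 2*i+3) ` {..<t}"
  proof (intro equalityI subsetI)
    fix x assume "x \<in> {2*i+1 | i. 1 \<le> i \<and> i \<le> t}"
    then obtain i where "x = 2*i+1" "1 \<le> i" "i \<le> t" by auto
    thus "x \<in> (\<lambda>i. 2*i+3) ` {..<t}" by (intro image_eqI[of _ _ "i-1"]) auto
  next
    fix x assume "x \<in> (\<lambda>i. 2*i+3) ` {..<t}"
    then obtain i where "x = 2*i+3" "i<t" by auto
    thus "x \<in> {2*i+1 | i. 1 \<le> i \<and> i \<le> t}" by (intro CollectI exI[of _ "i+1"]) auto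
  qed
  have e: "Cset t = (\<lambda>i. 2*i+3) ` {..<t} \<union> {2*t+2}"
    unfolding Cset_def e0 ..
  have "(\<Sum>j\<in>Cset t. h j) = (\<Sum>j\<in>(\<lambda>i. 2*i+3) ` {..<t}. h j) + h (2*t+2)"
    unfolding e by (subst sum.union_disjoint) auto
  also have "(\<Sum>j\<in>(\<lambda>i. 2*i+3) ` {..<t}. h j) = (\<Sum>i<t. h (2*i+3))"
    by (subst sum.reindex) (auto simp: inj_on_def)
  finally show ?thesis .
qed

lemma Cset_le: "j \<in> Cset t \<Longrightarrow> j \<le> 2*t+2"
  unfolding Cset_def by auto

lemma geo: "((Y::gf2 poly)^2+1) * (\<Sum>i<t. (Y^2)^i) = (Y^2)^t + 1"
  using power_diff_1_eq[of "Y^2" t] by (simp add: poly_diff)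

lemma id1: fixes y z :: "'a::comm_semiring_1"
  shows "(y^2+1)*(y^2*z+y^4*z^2+1) + (y^5*z+y)*(z+1) + (y^3*z+y^3*z) = (y^3*z+1)*(y*z+1)*(y^2+y+1)"
  by (simp add: algebra_simps power2_eq_square power3_eq_cube power4_eq_xxxx numeral_eq_Suc)
lemma id2: fixes y z g :: "'a::comm_semiring_1"
  shows "(y^2+1)*(y^2*z + (y^5*z*g + y*g + y^4*z^2+1)) = (y^2+1)*(y^2*z+y^4*z^2+1) + (y^5*z+y)*((y^2+1)*g)"
  by (simp add: algebra_simps)
lemma id3: fixes y :: "'a::comm_semiring_1"
  shows "(y+1)^2 = y^2+1+(y+y)"
  by (simp add: algebra_simps power2_eq_square)

lemma g1: "n + (m - j) = m + (n - j) \<Longrightarrow> (y::'a::comm_semiring_1)^n*(y^j + y^(m-j)) = y^(n+j) + y^m*y^(n-j)"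
  by (simp only: distrib_left power_add[symmetric])
lemma g2: "(a::'a::comm_semiring_1) + c*b + (b+b) = (a+b) + (c+1)*b"
  by (simp add: algebra_simps)
lemma g3: "(x::'a::comm_semiring_1)*y*(1+s) = y*(x + x*s)"
  by (simp add: algebra_simps)
lemma g4: "(s::'a::comm_semiring_1)*(u + (a + c*b)) = s*(u+a) + c*(s*b)"
  by (simp add: algebra_simps)

lemma key:
  fixes Y :: "gf2 poly"
  assumes "2*t+2 \<le> m"
  shows "\<exists>W. Y^(2*t+2) * (Y+1)^2 * (1 + (\<Sum>j\<in>Cset t. Y^j + Y^(m-j)))
     = (Y^(2*t+3)+1)*(Y^(2*t+1)+1)*(Y^2+Y+1) + (Y^m+1)*W"
proof -
  define n where "n = 2*t+2"
  define B where "B = (\<Sum>j\<in>Cset t. Y^(n-j))"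
  define A where "A = (\<Sum>j\<in>Cset t. Y^(n+j) + Y^(n-j))"
  have "Y^n * (\<Sum>j\<in>Cset t. Y^j + Y^(m-j)) = (\<Sum>j\<in>Cset t. Y^(n+j) + Y^m * Y^(n-j))"
    unfolding sum_distrib_left
  proof (rule sum.cong[OF refl])
    fix j assume "j \<in> Cset t"
    hence "j \<le> n" using Cset_le n_def by auto
    hence "n + (m - j) = m + (n - j)" using assms n_def by simp
    thus "Y ^ n * (Y ^ j + Y ^ (m - j)) = Y ^ (n + j) + Y ^ m * Y ^ (n - j)"
      by (rule g1)
  qed
  also have "\<dots> = A + (Y^m+1) * B"
    unfolding A_def B_def sum_distrib_left sum.distrib[symmetric]
    by (rule sum.cong[OF refl]) (metis g2 poly_add_self add_0_right)
  finally have 1: "Y^n * (\<Sum>j\<in>Cset t. Y^j + Y^(m-j)) = A + (Y^m+1) * B" .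
  define G where "G = (\<Sum>i<t. (Y^2)^i)"
  define Z where "Z = (Y^2)^t"
  have g: "(Y^2+1) * G = Z + 1" unfolding G_def Z_def by (rule geo)
  have A1: "A = (\<Sum>i<t. Y^(n+(2*i+3)) + Y^(n-(2*i+3))) + (Y^(n+n) + 1)"
    unfolding A_def Cset_sum by (simp add: n_def)
  have s1: "(\<Sum>i<t. Y^(n+(2*i+3))) = Y^5 * Z * G"
    unfolding G_def Z_def sum_distrib_left n_def
    by (rule sum.cong[OF refl]) (simp only: power_add[symmetric] power_mult[symmetric] mult.assoc[symmetric], rule arg_cong[where f="power Y"], simp)
  have s2: "(\<Sum>i<t. Y^(n-(2*i+3))) = Y * G"
  proof -
    have "(\<Sum>i<t. Y^(n-(2*i+3))) = (\<Sum>i<t. Y^(2*(t - Suc i)+1))"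
      by (rule sum.cong[OF refl], rule arg_cong[where f="power Y"]) (simp add: n_def)
    also have "\<dots> = (\<Sum>i<t. Y^(2*i+1))" by (rule sum.nat_diff_reindex)
    also have "\<dots> = Y * G" unfolding G_def sum_distrib_left
      by (rule sum.cong[OF refl]) (metis power_add power_mult power_one_right mult.commute)
    finally show ?thesis .
  qed
  have hnn: "Y^(n+n) = Y^4*Z^2" unfolding n_def Z_def
    by (simp only: power_add[symmetric] power_mult[symmetric]) (rule arg_cong[where f="power Y"], simp)
  have hn: "Y^n = Y^2*Z" unfolding n_def Z_def
    by (simp only: power_add[symmetric] power_mult[symmetric]) (rule arg_cong[where f="power Y"], simp)
  have A2: "A = Y^5*Z*G + Y*G + Y^4*Z^2 + 1"
    unfolding A1 sum.distrib s1 s2 hnn by (simp add: add.assoc)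
  have sq: "(Y+1)^2 = Y^2+1"
    unfolding id3 poly_add_self by simp
  have "Y^n * (Y+1)^2 * (1 + (\<Sum>j\<in>Cset t. Y^j + Y^(m-j))) = (Y+1)^2 * (Y^n + Y^n * (\<Sum>j\<in>Cset t. Y^j + Y^(m-j)))"
    by (rule g3)
  also have "\<dots> = (Y^2+1) * (Y^2*Z + A) + (Y^m+1)*((Y+1)^2*B)"
    unfolding 1 unfolding sq hn by (rule g4)
  also have "(Y^2+1) * (Y^2*Z + A) = (Y^2+1)*(Y^2*Z + Y^4*Z^2 + 1) + (Y^5*Z+Y)*((Y^2+1)*G)"
    unfolding A2 by (rule id2)
  also have "\<dots> = (Y^2+1)*(Y^2*Z + Y^4*Z^2 + 1) + (Y^5*Z+Y)*(Z+1)"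
    unfolding g ..
  also have "\<dots> = (Y^3*Z+1)*(Y*Z+1)*(Y^2+Y+1)"
    using id1[of Y Z] unfolding poly_add_self by simp
  also have "Y^3*Z = Y^(2*t+3)" unfolding Z_def
    by (simp only: power_add[symmetric] power_mult[symmetric]) (rule arg_cong[where f="power Y"], simp)
  also have "Y*Z = Y^(2*t+1)" unfolding Z_def
    by (simp only: power_add[symmetric] power_mult[symmetric] power_Suc[symmetric]) (rule arg_cong[where f="power Y"], simp)
  finally show ?thesis unfolding n_def by blast
qed

lemma monom_pc: "monom 1 j \<circ>\<^sub>p q = (q::gf2 poly) ^ j"
  by (simp add: monom_altdef pcompose_hom.hom_power)

lemma P_eq: "pcompose (cpoly m t) Y = 1 + (\<Sum>j\<in>Cset t. Y^j + Y^(m-j))"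
  unfolding cpoly_def by (simp add: pcompose_add pcompose_sum monom_pc)

lemma dvd_pow1: "((y::'a::comm_ring_1) - 1) dvd (y^n - 1)"
  using power_diff_1_eq[of y n] by simp

lemma dvd_powX: "h dvd n \<Longrightarrow> ((x::'a::comm_ring_1)^h - 1) dvd (x^n - 1)"
  by (metis dvd_def dvd_pow1 power_mult)

lemma gcd_pow:
  fixes x p :: "'a::comm_ring_1"
  assumes "p dvd x^a - 1" "p dvd x^b - 1" "a > 0"
  shows "p dvd x^(gcd a b) - 1"
proof -
  obtain u v where uv: "a*u = b*v + gcd a b" using bezout_nat[of a b] assms(3) by auto
  have 1: "p dvd x^(a*u) - 1" using assms(1) dvd_powX[of a "a*u" x] dvd_trans by auto
  have 2: "p dvd x^(b*v) - 1" using assms(2) dvd_powX[of b "b*v" x] dvd_trans by auto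
  have "x^(a*u) - 1 - (x^(b*v) - 1)*x^(gcd a b) = x^(gcd a b) - 1"
    unfolding uv by (simp add: power_add algebra_simps)
  moreover have "p dvd x^(a*u) - 1 - (x^(b*v) - 1)*x^(gcd a b)"
    using 1 2 by (simp add: dvd_diff)
  ultimately show ?thesis by metis
qed

lemma deg_m1: "0 < h \<Longrightarrow> degree (monom 1 h - (1::gf2 poly)) = h"
proof -
  assume "0 < h"
  have "degree (monom 1 h + (- 1::gf2 poly)) = degree (monom 1 h :: gf2 poly)"
    by (rule degree_add_eq_left) (simp add: degree_monom_eq \<open>0 < h\<close>)
  thus ?thesis by (simp add: degree_monom_eq)
qed

lemma of_nat_odd: "odd r \<Longrightarrow> (of_nat r :: gf2 poly) = 1"
proof -
  assume "odd r"
  then obtain s where "r = 2*s+1" by (metis oddE)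
  thus ?thesis by (simp add: poly_two)
qed
lemma L:
  fixes X :: "gf2 poly"
  defines "X \<equiv> monom 1 1"
  assumes "odd a" "gcd m (a*k) \<noteq> gcd m k" "m>0" "k>0"
  shows "\<exists>q. prime q \<and> q dvd X^m - 1 \<and> q dvd X^(a*k) - 1 \<and> \<not> q dvd X^k - 1"
proof -
  define g where "g = gcd m k"
  define h where "h = gcd m (a*k)"
  have gpos: "g > 0" using assms g_def by simp
  have "g dvd h" unfolding g_def h_def by (rule gcd_greatest) auto
  then obtain r where hr: "h = g*r" by (auto simp: dvd_def)
  have "h dvd gcd (a*m) (a*k)" unfolding h_def by (rule gcd_greatest) auto
  hence "h dvd a*g" unfolding g_def by (simp add: gcd_mult_distrib_nat)
  hence "g*r dvd g*a" using hr by (simp add: mult.commute)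
  hence "r dvd a" using gpos nat_mult_dvd_cancel1 by blast
  hence rodd: "odd r" using assms(2) dvd_trans[of 2 r a] by blast
  have r1: "r \<noteq> 1" using hr assms(3) g_def h_def by auto
  have rpos: "r > 0" using rodd by (cases r) auto
  have hpos: "h > 0" using hr gpos rpos by simp
  define Q where "Q = (\<Sum>i<r. (X^g)^i)"
  have fac: "X^h - 1 = (X^g - 1) * Q"
    unfolding Q_def hr power_mult by (rule power_diff_1_eq)
  have Xpow: "\<And>n. X^n = monom 1 n" unfolding X_def by (rule x_pow_n)
  have dh: "degree (X^h - 1) = h" using deg_m1[OF hpos] Xpow by simp
  have dg: "degree (X^g - 1) = g" using deg_m1[OF gpos] Xpow by simp
  have Qnz: "Q \<noteq> 0" using fac dh hpos by auto
  have gnz: "X^g - 1 \<noteq> 0" using dg gpos by auto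
  have "\<not> is_unit Q"
  proof
    assume "is_unit Q"
    hence "degree Q = 0" using Qnz is_unit_iff_degree by blast
    moreover have "degree (X^h-1) = degree (X^g - 1) + degree Q"
      unfolding fac by (rule degree_mult_eq[OF gnz Qnz])
    ultimately have "h = g" using dh dg by linarith
    thus False using hr r1 gpos by simp
  qed
  then obtain q where q: "prime q" "q dvd Q" using prime_divisor_exists Qnz by blast
  have qh: "q dvd X^h - 1" using q fac by simp
  have "h dvd m" "h dvd a*k" unfolding h_def by auto
  hence qm: "q dvd X^m - 1" and qa: "q dvd X^(a*k) - 1"
    using qh dvd_powX[of h _ X] dvd_trans by blast+
  have "Q - of_nat r = (\<Sum>i<r. (X^g)^i - 1)"
    unfolding Q_def by (simp add: sum_subtractf)
  also have "(X^g - 1) dvd \<dots>" by (rule dvd_sum) (rule dvd_pow1)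
  finally have Q1: "(X^g - 1) dvd Q - 1" using of_nat_odd[OF rodd] by simp
  have "\<not> q dvd X^k - 1"
  proof
    assume "q dvd X^k - 1"
    hence "q dvd X^g - 1" unfolding g_def using gcd_pow[OF qm] assms(4) by blast
    hence "q dvd Q - 1" using Q1 dvd_trans by blast
    hence "q dvd Q - (Q - 1)" using q(2) dvd_diff by blast
    hence "q dvd 1" by simp
    thus False using q(1) not_prime_unit by blast
  qed
  thus ?thesis using q(1) qm qa by blast
qed
lemma cube: "((y::'a::comm_ring_1) - 1)*(y^2+y+1) = y^3 - 1"
  by (simp add: algebra_simps power2_eq_square power3_eq_cube)

theorem proposition9:
  fixes m k t :: nat
  assumes "m > 0" and "k > 0" and "t > 0"
    and "real t < (real m - 3) / 4"
  shows "gcd (pcompose (cpoly m t) (monom 1 k)) (monom 1 m - 1) = 1 \<longleftrightarrow>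
    (gcd m ((2*t+3)*k) = gcd m k \<and> gcd m ((2*t+1)*k) = gcd m k \<and> gcd m (3*k) = gcd m k)"
proof -
  define X where "X = (monom 1 1 :: gf2 poly)"
  have Xpow: "\<And>n. X^n = monom 1 n" unfolding X_def by (rule x_pow_n)
  define Y where "Y = X^k"
  define P where "P = pcompose (cpoly m t) (monom 1 k)"
  define f where "f = X^m - 1"
  define S where "S = (\<Sum>j\<in>Cset t. Y^j + Y^(m-j))"
  define R where "R = (Y^(2*t+3)+1)*(Y^(2*t+1)+1)*(Y^2+Y+1)"
  have mon: "monom 1 m - 1 = f" "monom 1 k = Y" unfolding f_def Y_def Xpow by simp_all
  have PS: "P = 1 + S" unfolding P_def mon S_def by (rule P_eq)
  have Ypow: "\<And>a. Y^a = X^(a*k)" unfolding Y_def by (simp add: power_mult[symmetric] mult.commute)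
  have mle: "2*t+2 \<le> m"
  proof -
    have "real (2*t+2) \<le> real m" using assms(4) by (simp add: field_simps)
    thus ?thesis by (simp only: of_nat_le_iff)
  qed
  obtain W where W: "Y^(2*t+2) * (Y+1)^2 * P = R + (Y^m+1)*W"
    using key[OF mle, of Y] unfolding PS S_def R_def by blast
  have "f dvd Y^m + 1" unfolding f_def Ypow poly_diff[symmetric] by (rule dvd_powX) simp
  then obtain V where "Y^m + 1 = f * V" by (auto simp: dvd_def)
  hence E: "Y^(2*t+2) * (Y+1)^2 * P = R + f*(V*W)" using W by (simp add: mult.assoc)
  have fnz: "f \<noteq> 0" using deg_m1[OF assms(1)] Xpow assms(1) unfolding f_def by auto
  have notX: "\<not> q dvd Y" if "prime q" "q dvd f" for q
  proof
    assume "q dvd Y"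
    hence "q dvd X" unfolding Y_def using prime_dvd_power that(1) by blast
    hence "q dvd X^m" using assms(1) dvd_trans dvd_power[of m X] by blast
    hence "q dvd X^m - f" using that(2) dvd_diff by blast
    hence "q dvd 1" unfolding f_def by simp
    thus False using that(1) not_prime_unit by blast
  qed
  have G: "\<not> q dvd Y - 1" if "prime q" "q dvd f" "q dvd P" for q
  proof
    assume a: "q dvd Y - 1"
    have "S = (\<Sum>j\<in>Cset t. (Y^j - 1) + (Y^(m-j) - 1))"
      unfolding S_def poly_diff by (rule sum.cong[OF refl]) (simp add: poly_add_self add.assoc add.left_commute[of 1])
    also have "(Y - 1) dvd \<dots>" by (intro dvd_sum dvd_add dvd_pow1)
    finally have "q dvd S" using a dvd_trans by blast
    hence "q dvd P - S" using that(3) dvd_diff by blast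
    hence "q dvd 1" unfolding PS by simp
    thus False using that(1) not_prime_unit by blast
  qed
  have H: "q dvd Y - 1" if "prime q" "q dvd f" "q dvd X^(a*k) - 1" "gcd m (a*k) = gcd m k" for q a
  proof -
    have "q dvd X^(gcd m k) - 1" using gcd_pow[of q X m "a*k"] that assms(1) unfolding f_def by simp
    moreover have "X^(gcd m k) - 1 dvd X^k - 1" by (rule dvd_powX) simp
    ultimately show ?thesis unfolding Y_def using dvd_trans by blast
  qed
  have RP: "q dvd R \<longleftrightarrow> q dvd P" if "prime q" "q dvd f" "\<not> q dvd Y - 1" for q
  proof
    assume "q dvd R"
    hence "q dvd Y^(2*t+2) * (Y+1)^2 * P" unfolding E using that(2) by (simp add: dvd_add)
    moreover have "\<not> q dvd Y^(2*t+2)" using notX[OF that(1,2)] prime_dvd_power that(1) by blast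
    moreover have "\<not> q dvd (Y+1)^2" using that(3) prime_dvd_power that(1) unfolding poly_diff by blast
    ultimately show "q dvd P" using that(1) prime_dvd_mult_iff by blast
  next
    assume "q dvd P"
    hence "q dvd Y^(2*t+2) * (Y+1)^2 * P" by simp
    hence "q dvd Y^(2*t+2) * (Y+1)^2 * P - f*(V*W)" using that(2) by (simp add: dvd_diff)
    thus "q dvd R" unfolding E by simp
  qed
  have A1: "Y^(2*t+3)+1 = X^((2*t+3)*k) - 1" "Y^(2*t+1)+1 = X^((2*t+1)*k) - 1"
    unfolding Ypow poly_diff by simp_all
  have C1: "(Y - 1)*(Y^2+Y+1) = X^(3*k) - 1" by (simp only: cube Ypow[of 3])
  have gcdP: "gcd P f = 1 \<longleftrightarrow> \<not>(\<exists>q. prime q \<and> q dvd P \<and> q dvd f)"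
  proof
    assume "gcd P f = 1"
    thus "\<not>(\<exists>q. prime q \<and> q dvd P \<and> q dvd f)"
      using not_prime_unit by (metis gcd_greatest is_unit_gcd_iff)
  next
    assume n: "\<not>(\<exists>q. prime q \<and> q dvd P \<and> q dvd f)"
    show "gcd P f = 1"
    proof (rule ccontr)
      assume "gcd P f \<noteq> 1"
      hence "\<not> is_unit (gcd P f)" using is_unit_gcd_iff by blast
      moreover have "gcd P f \<noteq> 0" using fnz by simp
      ultimately obtain q where "prime q" "q dvd gcd P f" using prime_divisor_exists by blast
      thus False using n by auto
    qed
  qed
  have "gcd P f = 1 \<longleftrightarrow>
    (gcd m ((2*t+3)*k) = gcd m k \<and> gcd m ((2*t+1)*k) = gcd m k \<and> gcd m (3*k) = gcd m k)"
  proof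
    assume g1: "gcd P f = 1"
    have "gcd m (a*k) = gcd m k" if a: "a \<in> {2*t+3, 2*t+1, 3}" for a
    proof (rule ccontr)
      assume ne: "gcd m (a*k) \<noteq> gcd m k"
      have "odd a" using a by auto
      from L[OF this ne assms(1,2)] obtain q where q: "prime q" "q dvd f" "q dvd X^(a*k) - 1"
        "\<not> q dvd Y - 1" unfolding X_def[symmetric] f_def[symmetric] Y_def[symmetric] by blast
      have "q dvd R"
      proof -
        consider "a = 2*t+3" | "a = 2*t+1" | "a = 3" using a by blast
        thus ?thesis
        proof cases
          case 1
          have "q dvd Y^(2*t+3)+1" using q(3) unfolding 1 A1(1)[symmetric] by blast
          thus ?thesis unfolding R_def by (intro dvd_mult2)
        next
          case 2
          have "q dvd Y^(2*t+1)+1" using q(3) unfolding 2 A1(2)[symmetric] by blast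
          thus ?thesis unfolding R_def by (intro dvd_mult2 dvd_mult)
        next
          case 3
          have "q dvd (Y - 1)*(Y^2+Y+1)" using q(3) unfolding 3 C1 by blast
          hence "q dvd Y^2+Y+1" using prime_dvd_mult_iff[OF q(1)] q(4) by blast
          thus ?thesis unfolding R_def by (rule dvd_mult)
        qed
      qed
      hence "q dvd P" using RP q by blast
      thus False using gcdP g1 q by blast
    qed
    thus "gcd m ((2*t+3)*k) = gcd m k \<and> gcd m ((2*t+1)*k) = gcd m k \<and> gcd m (3*k) = gcd m k"
      by blast
  next
    assume c: "gcd m ((2*t+3)*k) = gcd m k \<and> gcd m ((2*t+1)*k) = gcd m k \<and> gcd m (3*k) = gcd m k"
    show "gcd P f = 1" unfolding gcdP
    proof
      assume "\<exists>q. prime q \<and> q dvd P \<and> q dvd f"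
      then obtain q where q: "prime q" "q dvd P" "q dvd f" by blast
      have nY: "\<not> q dvd Y - 1" using G q by blast
      hence "q dvd R" using RP q by blast
      hence "q dvd Y^(2*t+3)+1 \<or> q dvd Y^(2*t+1)+1 \<or> q dvd Y^2+Y+1"
        unfolding R_def by (simp only: prime_dvd_mult_iff[OF q(1)] disj_assoc)
      hence "q dvd X^((2*t+3)*k) - 1 \<or> q dvd X^((2*t+1)*k) - 1 \<or> q dvd (Y - 1)*(Y^2+Y+1)"
        unfolding A1 using dvd_mult by blast
      thus False
      proof (elim disjE)
        assume "q dvd X^((2*t+3)*k) - 1" thus False using H[OF q(1,3)] c nY by blast
      next
        assume "q dvd X^((2*t+1)*k) - 1" thus False using H[OF q(1,3)] c nY by blast
      next
        assume "q dvd (Y - 1)*(Y^2+Y+1)" thus False unfolding C1 using H[OF q(1,3)] c nY by blast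
      qed
    qed
  qed
  thus ?thesis unfolding mon(1) P_def[symmetric] .
qed
end
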